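(* Let $n\geq 3$ and let $N=(V,A)$ be a proper binary level-1 network on $n$ leaves. Then $2n+1\leq |V|\leq 3n-2$ and $2n+1\leq |A|\leq 3.5(n-1)$. Moreover, if $n=3$ then $|V|=|A|=7$ (so all four bounds are attained) and $N$ is a simple network.
   Context: A leaf of a directed acyclic graph (DAG) is a vertex of in-degree 1 and out-degree 0. For a finite set $X$, a phylogenetic network on $X$ is a DAG (no loops, no multiple arcs) with a unique vertex $\rho_N$ (the root) of in-degree 0, which has out-degree at least 2, whose set of leaves is $X$, and in which every vertex other than the root and the leaves is either a split vertex (in-degree 1, out-degree $\geq 2$) or a hybrid vertex (in-degree $\geq 2$, out-degree $\geq 1$). It is binary if the root and all split vertices have out-degree 2 and every hybrid vertex has in-degree 2 and out-degree 1. $U(N)$ denotes the underlying undirected graph. A binary level-1 network is a binary phylogenetic network in which every biconnected component of $U(N)$ contains at most one hybrid vertex; by standing convention every cycle of $U(N)$ has at least four vertices. A gall of a level-1 network is a biconnected component of $U(N)$ with more than one edge (with the arc directions of $N$). A level-1 network is proper if it has at least one hybrid vertex (equivalently at least one gall). A binary level-1 network is simple if it has exactly one gall and every leaf is adjacent to a vertex of that gall. *)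

theory Defs
  imports Complex_Main
begin

text \<open>A directed graph is given by a vertex set V and an arc set A \<subseteq> V \<times> V
  (a set of pairs, so there are no multiple arcs).\<close>

definition indeg :: "('a \<times> 'a) set \<Rightarrow> 'a \<Rightarrow> nat" where
  "indeg A v = card {u. (u, v) \<in> A}"

definition outdeg :: "('a \<times> 'a) set \<Rightarrow> 'a \<Rightarrow> nat" where
  "outdeg A v = card {w. (v, w) \<in> A}"

definition dag :: "'a set \<Rightarrow> ('a \<times> 'a) set \<Rightarrow> bool" where
  "dag V A \<longleftrightarrow> finite V \<and> A \<subseteq> V \<times> V \<and> (\<forall>v. (v, v) \<notin> A\<^sup>+)"

definition leaves :: "'a set \<Rightarrow> ('a \<times> 'a) set \<Rightarrow> 'a set" where
  "leaves V A = {v \<in> V. indeg A v = 1 \<and> outdeg A v = 0}"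

definition is_root :: "'a set \<Rightarrow> ('a \<times> 'a) set \<Rightarrow> 'a \<Rightarrow> bool" where
  "is_root V A r \<longleftrightarrow> r \<in> V \<and> indeg A r = 0"

definition split_vertex :: "('a \<times> 'a) set \<Rightarrow> 'a \<Rightarrow> bool" where
  "split_vertex A v \<longleftrightarrow> indeg A v = 1 \<and> outdeg A v \<ge> 2"

definition hybrid_vertex :: "('a \<times> 'a) set \<Rightarrow> 'a \<Rightarrow> bool" where
  "hybrid_vertex A v \<longleftrightarrow> indeg A v \<ge> 2 \<and> outdeg A v \<ge> 1"

definition phylo_network :: "'a set \<Rightarrow> ('a \<times> 'a) set \<Rightarrow> 'a set \<Rightarrow> bool" where
  "phylo_network V A X \<longleftrightarrow>
     dag V A \<and>
     (\<exists>!r. is_root V A r) \<and>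
     (\<forall>r. is_root V A r \<longrightarrow> outdeg A r \<ge> 2) \<and>
     leaves V A = X \<and>
     (\<forall>v\<in>V. is_root V A v \<or> v \<in> X \<or> split_vertex A v \<or> hybrid_vertex A v)"

definition binary_network :: "'a set \<Rightarrow> ('a \<times> 'a) set \<Rightarrow> 'a set \<Rightarrow> bool" where
  "binary_network V A X \<longleftrightarrow>
     phylo_network V A X \<and>
     (\<forall>v\<in>V. (is_root V A v \<longrightarrow> outdeg A v = 2) \<and>
             (split_vertex A v \<longrightarrow> outdeg A v = 2) \<and>
             (hybrid_vertex A v \<longrightarrow> indeg A v = 2 \<and> outdeg A v = 1))"

definition uedges_on :: "('a \<times> 'a) set \<Rightarrow> 'a set \<Rightarrow> ('a \<times> 'a) set" where
  "uedges_on A S = {(u, v). u \<in> S \<and> v \<in> S \<and> ((u, v) \<in> A \<or> (v, u) \<in> A)}"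

definition uconnected_on :: "('a \<times> 'a) set \<Rightarrow> 'a set \<Rightarrow> bool" where
  "uconnected_on A S \<longleftrightarrow> S \<noteq> {} \<and> (\<forall>u\<in>S. \<forall>v\<in>S. (u, v) \<in> (uedges_on A S)\<^sup>*)"

text \<open>A vertex set S spans a biconnected (induced) subgraph of U(N): at least two
  vertices, connected, and it stays connected after deleting any single vertex
  (so a single edge counts as biconnected).\<close>
definition ubiconnected :: "'a set \<Rightarrow> ('a \<times> 'a) set \<Rightarrow> 'a set \<Rightarrow> bool" where
  "ubiconnected V A S \<longleftrightarrow> S \<subseteq> V \<and> finite S \<and> card S \<ge> 2 \<and> uconnected_on A S \<and>
     (\<forall>x\<in>S. uconnected_on A (S - {x}))"

text \<open>Biconnected components (blocks) of U(N): maximal biconnected subgraphs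
  (which are induced, hence determined by their vertex sets).\<close>
definition bicomponent :: "'a set \<Rightarrow> ('a \<times> 'a) set \<Rightarrow> 'a set \<Rightarrow> bool" where
  "bicomponent V A S \<longleftrightarrow> ubiconnected V A S \<and>
     (\<forall>T. ubiconnected V A T \<and> S \<subseteq> T \<longrightarrow> T = S)"

text \<open>No cycle of U(N) with fewer than four vertices, i.e. no triangle
  (U(N) is a simple graph, so cycles have at least three vertices).\<close>
definition no_short_cycle :: "('a \<times> 'a) set \<Rightarrow> bool" where
  "no_short_cycle A \<longleftrightarrow>
     \<not> (\<exists>a b c. a \<noteq> b \<and> b \<noteq> c \<and> a \<noteq> c \<and>
        (a, b) \<in> uedges_on A UNIV \<and> (b, c) \<in> uedges_on A UNIV \<and> (a, c) \<in> uedges_on A UNIV)"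

definition binary_level1 :: "'a set \<Rightarrow> ('a \<times> 'a) set \<Rightarrow> 'a set \<Rightarrow> bool" where
  "binary_level1 V A X \<longleftrightarrow>
     binary_network V A X \<and>
     (\<forall>S. bicomponent V A S \<longrightarrow> card {v \<in> S. hybrid_vertex A v} \<le> 1) \<and>
     no_short_cycle A"

definition gall :: "'a set \<Rightarrow> ('a \<times> 'a) set \<Rightarrow> 'a set \<Rightarrow> bool" where
  "gall V A S \<longleftrightarrow> bicomponent V A S \<and> card {(u, v) \<in> A. u \<in> S \<and> v \<in> S} > 1"

definition proper_network :: "'a set \<Rightarrow> ('a \<times> 'a) set \<Rightarrow> bool" where
  "proper_network V A \<longleftrightarrow> (\<exists>v\<in>V. hybrid_vertex A v)"

definition simple_network :: "'a set \<Rightarrow> ('a \<times> 'a) set \<Rightarrow> 'a set \<Rightarrow> bool" where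
  "simple_network V A X \<longleftrightarrow> binary_level1 V A X \<and>
     (\<exists>G. gall V A G \<and> (\<forall>G'. gall V A G' \<longrightarrow> G' = G) \<and>
          (\<forall>x\<in>X. \<exists>g\<in>G. (g, x) \<in> A \<or> (x, g) \<in> A))"

end

theory Submission
  imports Defs
begin



definition adj :: "('a \<times> 'a) set \<Rightarrow> 'a \<Rightarrow> 'a \<Rightarrow> bool" where
  "adj A u v \<longleftrightarrow> (u, v) \<in> A \<or> (v, u) \<in> A"

lemma uedges_on_iff: "(u, v) \<in> uedges_on A S \<longleftrightarrow> u \<in> S \<and> v \<in> S \<and> adj A u v"
  by (auto simp: uedges_on_def adj_def)

lemma uedges_mono: "S \<subseteq> T \<Longrightarrow> uedges_on A S \<subseteq> uedges_on A T"
  by (auto simp: uedges_on_def)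

lemma uedges_conv: "(uedges_on A S)\<inverse> = uedges_on A S"
  by (auto simp: uedges_on_def)

lemma uedges_sym: "(u, v) \<in> (uedges_on A S)\<^sup>* \<Longrightarrow> (v, u) \<in> (uedges_on A S)\<^sup>*"
  by (metis converseD converseI rtrancl_converseI uedges_conv)

lemma uconn_altI:
  assumes "c \<in> S" "\<forall>z\<in>S. (c, z) \<in> (uedges_on A S)\<^sup>*"
  shows "uconnected_on A S"
  unfolding uconnected_on_def
  using assms by (meson empty_iff rtrancl_trans uedges_sym)

lemma uconn_Un:
  assumes "uconnected_on A S1" "uconnected_on A S2" "c \<in> S1" "c \<in> S2"
  shows "uconnected_on A (S1 \<union> S2)"
proof (rule uconn_altI[of c])
  show "c \<in> S1 \<union> S2" using assms by auto
  have m1: "(uedges_on A S1)\<^sup>* \<subseteq> (uedges_on A (S1 \<union> S2))\<^sup>*"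
    by (intro rtrancl_mono uedges_mono) auto
  have m2: "(uedges_on A S2)\<^sup>* \<subseteq> (uedges_on A (S1 \<union> S2))\<^sup>*"
    by (intro rtrancl_mono uedges_mono) auto
  show "\<forall>z\<in>S1 \<union> S2. (c, z) \<in> (uedges_on A (S1 \<union> S2))\<^sup>*"
    using assms m1 m2 unfolding uconnected_on_def by blast
qed

fun apath :: "('a \<times> 'a) set \<Rightarrow> 'a list \<Rightarrow> bool" where
  "apath A [] = True"
| "apath A [x] = True"
| "apath A (x # y # zs) = ((x, y) \<in> A \<and> apath A (y # zs))"

lemma apath_append:
  "apath A (xs @ ys) \<longleftrightarrow> apath A xs \<and> apath A ys \<and> (xs \<noteq> [] \<longrightarrow> ys \<noteq> [] \<longrightarrow> (last xs, hd ys) \<in> A)"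
proof (induction xs)
  case Nil then show ?case by simp
next
  case (Cons x xs)
  then show ?case by (cases xs; cases ys) auto
qed

lemma apath_take: "apath A xs \<Longrightarrow> apath A (take i xs)"
  by (metis append_take_drop_id apath_append)

lemma apath_drop: "apath A xs \<Longrightarrow> apath A (drop i xs)"
  by (metis append_take_drop_id apath_append)

lemma apath_tl: "apath A xs \<Longrightarrow> apath A (tl xs)"
  by (metis apath_drop drop_Suc drop_0)

lemma apath_butlast: "apath A xs \<Longrightarrow> apath A (butlast xs)"
  by (metis apath_take butlast_conv_take)

lemma apath_conn:
  "apath A xs \<Longrightarrow> xs \<noteq> [] \<Longrightarrow> set xs \<subseteq> S \<Longrightarrow> z \<in> set xs \<Longrightarrow> (hd xs, z) \<in> (uedges_on A S)\<^sup>*"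
proof (induction A xs rule: apath.induct)
  case (3 A x y zs)
  then have e: "(x, y) \<in> uedges_on A S" by (auto simp: uedges_on_iff adj_def)
  show ?case
  proof (cases "z = x")
    case True then show ?thesis by simp
  next
    case False
    then have "(y, z) \<in> (uedges_on A S)\<^sup>*" using 3 by auto
    then show ?thesis using e by (simp add: converse_rtrancl_into_rtrancl)
  qed
qed auto

lemma apath_uconn: "apath A xs \<Longrightarrow> xs \<noteq> [] \<Longrightarrow> uconnected_on A (set xs)"
  by (rule uconn_altI[of "hd xs"]) (auto intro: apath_conn)

lemma apath_trancl:
  "apath A xs \<Longrightarrow> i < j \<Longrightarrow> j < length xs \<Longrightarrow> (xs ! i, xs ! j) \<in> A\<^sup>+"
proof (induction A xs arbitrary: i j rule: apath.induct)
  case (3 A x y zs)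
  show ?case
  proof (cases i)
    case 0
    show ?thesis
    proof (cases "j = 1")
      case True then show ?thesis using 3 0 by auto
    next
      case False
      then have "((y # zs) ! 0, (y # zs) ! (j - 1)) \<in> A\<^sup>+"
        using 3 by (intro "3.IH") auto
      then show ?thesis using 3 0 False
        by (cases j) (auto intro: trancl_into_trancl2)
    qed
  next
    case (Suc i')
    then obtain j' where "j = Suc j'" using 3 by (cases j) auto
    then show ?thesis using 3 Suc by auto
  qed
qed auto

lemma apath_distinct: "acyclic A \<Longrightarrow> apath A xs \<Longrightarrow> distinct xs"
  unfolding distinct_conv_nth acyclic_def
  by (metis apath_trancl linorder_neqE_nat)

lemma apath_exists:
  "(x, y) \<in> A\<^sup>* \<Longrightarrow> \<exists>xs. apath A xs \<and> xs \<noteq> [] \<and> hd xs = x \<and> last xs = y"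
proof (induction rule: converse_rtrancl_induct)
  case base
  then show ?case by (intro exI[of _ "[y]"]) auto
next
  case (step x x')
  then obtain xs where "apath A xs" "xs \<noteq> []" "hd xs = x'" "last xs = y" by blast
  then show ?case using step by (intro exI[of _ "x # xs"]) (cases xs; auto)
qed

lemma apath_rtrancl_last:
  "apath A xs \<Longrightarrow> z \<in> set xs \<Longrightarrow> (z, last xs) \<in> A\<^sup>*"
  by (induction A xs arbitrary: z rule: apath.induct) (auto intro: converse_rtrancl_into_rtrancl)

lemma apath_rtrancl_hd:
  "apath A xs \<Longrightarrow> z \<in> set xs \<Longrightarrow> (hd xs, z) \<in> A\<^sup>*"
  by (induction A xs rule: apath.induct) (auto intro: converse_rtrancl_into_rtrancl)




lemma cycle_internal:
  assumes p1: "apath A Q1" and p2: "apath A Q2" and d1: "distinct Q1"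
    and ne1: "Q1 \<noteq> []" and h1: "hd Q1 = a" and l1: "last Q1 = b"
    and int: "set Q1 \<inter> set Q2 = {a, b}" and ne2: "Q2 \<noteq> []"
    and hb: "a \<in> set Q2" "b \<in> set Q2"
    and x: "x \<in> set Q1" "x \<noteq> a" "x \<noteq> b"
  shows "uconnected_on A (set Q1 \<union> set Q2 - {x})"
proof -
  obtain i where i: "i < length Q1" "Q1 ! i = x" using x by (meson in_set_conv_nth)
  define L where "L = take i Q1"
  define R where "R = drop (Suc i) Q1"
  have Q1eq: "Q1 = L @ x # R" unfolding L_def R_def by (rule id_take_nth_drop[OF i(1), unfolded i(2)])
  have "i \<noteq> 0"
  proof
    assume "i = 0"
    then have "x = hd Q1" using i(2) ne1 by (simp add: hd_conv_nth)
    then show False using h1 x by simp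
  qed
  then have Lne: "L \<noteq> []" using i unfolding L_def by (auto simp: take_eq_Nil)
  have aL: "a \<in> set L" using Lne Q1eq h1 by (cases L) auto
  have Rne: "R \<noteq> []" using Q1eq l1 x by auto
  have "last Q1 = last R" using Rne by (subst Q1eq) simp
  then have bR: "b \<in> set R" using Rne l1 last_in_set by metis
  have xn: "x \<notin> set L" "x \<notin> set R" using d1 Q1eq by auto
  have xq2: "x \<notin> set Q2" using int x by auto
  have eq: "set Q1 \<union> set Q2 - {x} = (set L \<union> set Q2) \<union> set R"
    using Q1eq xn xq2 by auto
  have pL: "apath A L" unfolding L_def using p1 by (rule apath_take)
  have pR: "apath A R" unfolding R_def using p1 by (rule apath_drop)
  have c1: "uconnected_on A (set L \<union> set Q2)"
    by (rule uconn_Un[of _ _ _ a]) (use pL Lne p2 ne2 aL hb in \<open>auto intro: apath_uconn\<close>)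
  have "uconnected_on A ((set L \<union> set Q2) \<union> set R)"
    by (rule uconn_Un[of _ _ _ b]) (use c1 pR Rne bR hb in \<open>auto intro: apath_uconn\<close>)
  then show ?thesis using eq by simp
qed

lemma cycle_conn:
  assumes p1: "apath A Q1" and p2: "apath A Q2" and d1: "distinct Q1" and d2: "distinct Q2"
    and ne1: "Q1 \<noteq> []" and ne2: "Q2 \<noteq> []"
    and h1: "hd Q1 = a" and h2: "hd Q2 = a" and l1: "last Q1 = b" and l2: "last Q2 = b"
    and ab: "a \<noteq> b" and int: "set Q1 \<inter> set Q2 = {a, b}"
  shows "uconnected_on A (set Q1 \<union> set Q2) \<and>
         (\<forall>x\<in>set Q1 \<union> set Q2. uconnected_on A (set Q1 \<union> set Q2 - {x}))"
proof (intro conjI ballI)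
  have a1: "a \<in> set Q1" "a \<in> set Q2" using hd_in_set[OF ne1] hd_in_set[OF ne2] h1 h2 by auto
  have b1: "b \<in> set Q1" "b \<in> set Q2" using last_in_set[OF ne1] last_in_set[OF ne2] l1 l2 by auto
  show "uconnected_on A (set Q1 \<union> set Q2)"
    by (rule uconn_Un[of _ _ _ a]) (use p1 p2 ne1 ne2 a1 in \<open>auto intro: apath_uconn\<close>)
  fix x assume xin: "x \<in> set Q1 \<union> set Q2"
  have Q1c: "Q1 = a # tl Q1" using h1 ne1 by (metis list.collapse)
  have Q2c: "Q2 = a # tl Q2" using h2 ne2 by (metis list.collapse)
  have Q1b: "Q1 = butlast Q1 @ [b]" using l1 ne1 by (metis append_butlast_last_id)
  have Q2b: "Q2 = butlast Q2 @ [b]" using l2 ne2 by (metis append_butlast_last_id)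
  show "uconnected_on A (set Q1 \<union> set Q2 - {x})"
  proof (cases "x = a")
    case True
    have n1: "a \<notin> set (tl Q1)" using d1 by (subst (asm) Q1c) simp
    have n2: "a \<notin> set (tl Q2)" using d2 by (subst (asm) Q2c) simp
    have bt1: "b \<in> set (tl Q1)" using b1 ab by (subst (asm) Q1c) auto
    have bt2: "b \<in> set (tl Q2)" using b1 ab by (subst (asm) Q2c) auto
    have eq: "set Q1 \<union> set Q2 - {x} = set (tl Q1) \<union> set (tl Q2)"
      proof -
      have "set Q1 = insert a (set (tl Q1))" "set Q2 = insert a (set (tl Q2))"
        by (subst Q1c, simp, subst Q2c, simp)
      then show ?thesis using True n1 n2 by auto
    qed
    have "uconnected_on A (set (tl Q1) \<union> set (tl Q2))"
      by (rule uconn_Un[of _ _ _ b]) (use p1 p2 bt1 bt2 in \<open>auto intro: apath_uconn apath_tl\<close>)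
    then show ?thesis using eq by simp
  next
    case xa: False
    show ?thesis
    proof (cases "x = b")
      case True
      have n1: "b \<notin> set (butlast Q1)" using d1 by (subst (asm) Q1b) simp
      have n2: "b \<notin> set (butlast Q2)" using d2 by (subst (asm) Q2b) simp
      have bt1: "a \<in> set (butlast Q1)" using a1 ab by (subst (asm) Q1b) auto
      have bt2: "a \<in> set (butlast Q2)" using a1 ab by (subst (asm) Q2b) auto
      have eq: "set Q1 \<union> set Q2 - {x} = set (butlast Q1) \<union> set (butlast Q2)"
        proof -
        have "set Q1 = insert b (set (butlast Q1))" "set Q2 = insert b (set (butlast Q2))"
          by (subst Q1b, simp, subst Q2b, simp)
        then show ?thesis using True n1 n2 by auto
      qed
      have "uconnected_on A (set (butlast Q1) \<union> set (butlast Q2))"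
        by (rule uconn_Un[of _ _ _ a]) (use p1 p2 bt1 bt2 in \<open>auto intro: apath_uconn apath_butlast\<close>)
      then show ?thesis using eq by simp
    next
      case xb: False
      show ?thesis
      proof (cases "x \<in> set Q1")
        case True
        show ?thesis using cycle_internal[OF p1 p2 d1 ne1 h1 l1 int ne2 a1(2) b1(2) True xa xb] .
      next
        case False
        then have x2: "x \<in> set Q2" using xin by auto
        have int': "set Q2 \<inter> set Q1 = {a, b}" using int by auto
        show ?thesis using cycle_internal[OF p2 p1 d2 ne2 h2 l2 int' ne1 a1(1) b1(1) x2 xa xb]
          by (simp add: Un_commute)
      qed
    qed
  qed
qed

lemma ubic_Un:
  assumes "ubiconnected V A S1" "ubiconnected V A S2"
    and "a \<in> S1" "a \<in> S2" "b \<in> S1" "b \<in> S2" "a \<noteq> b"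
  shows "ubiconnected V A (S1 \<union> S2)"
  unfolding ubiconnected_def
proof (intro conjI ballI)
  show "S1 \<union> S2 \<subseteq> V" "finite (S1 \<union> S2)" using assms unfolding ubiconnected_def by auto
  show "2 \<le> card (S1 \<union> S2)" using assms unfolding ubiconnected_def
    by (meson card_mono finite_Un le_trans sup_ge1)
  show "uconnected_on A (S1 \<union> S2)"
    using assms unfolding ubiconnected_def by (intro uconn_Un[of _ _ _ a]) auto
  fix x
  have u1: "uconnected_on A (S1 - {x})" using assms unfolding ubiconnected_def
    by (cases "x \<in> S1") auto
  have u2: "uconnected_on A (S2 - {x})" using assms unfolding ubiconnected_def
    by (cases "x \<in> S2") auto
  obtain c where "c \<in> S1 - {x}" "c \<in> S2 - {x}" using assms by (cases "x = a") auto
  then have "uconnected_on A ((S1 - {x}) \<union> (S2 - {x}))" using u1 u2 by (intro uconn_Un[of _ _ _ c])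
  then show "uconnected_on A (S1 \<union> S2 - {x})" by (simp add: Un_Diff)
qed




locale bl1 =
  fixes V :: "'a set" and A :: "('a \<times> 'a) set" and X :: "'a set"
  assumes bl: "binary_level1 V A X"
begin

lemma bn: "binary_network V A X" using bl unfolding binary_level1_def by auto
lemma pn: "phylo_network V A X" using bn unfolding binary_network_def by auto
lemma dagV: "dag V A" using pn unfolding phylo_network_def by auto
lemma finV: "finite V" using dagV unfolding dag_def by auto
lemma AV: "A \<subseteq> V \<times> V" using dagV unfolding dag_def by auto
lemma acyc: "acyclic A" using dagV unfolding dag_def acyclic_def by auto
lemma finA: "finite A" using finV AV finite_subset by blast
lemma ntri: "no_short_cycle A" using bl unfolding binary_level1_def by auto
lemma lvl: "bicomponent V A S \<Longrightarrow> card {v\<in>S. hybrid_vertex A v} \<le> 1"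
  using bl unfolding binary_level1_def by auto
lemma Xleaves: "X = leaves V A" using pn unfolding phylo_network_def by auto
lemma XV: "X \<subseteq> V" using Xleaves unfolding leaves_def by auto

lemma no_loop: "(u, u) \<notin> A" using acyc unfolding acyclic_def by auto

lemma arcV: "(u, v) \<in> A \<Longrightarrow> u \<in> V \<and> v \<in> V" using AV by auto

lemma finpar: "finite {u. (u, v) \<in> A}"
  by (rule finite_subset[OF _ finV]) (auto dest: arcV)
lemma finch: "finite {w. (v, w) \<in> A}"
  by (rule finite_subset[OF _ finV]) (auto dest: arcV)

definition r where "r = (THE r. is_root V A r)"

lemma root: "is_root V A r"
  unfolding r_def using pn unfolding phylo_network_def by (metis theI')

lemma root_uniq: "is_root V A u \<Longrightarrow> u = r"
  using root pn unfolding phylo_network_def by auto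

lemma rV: "r \<in> V" using root unfolding is_root_def by auto

lemma deg_cases:
  assumes "v \<in> V"
  shows "(v = r \<and> indeg A v = 0 \<and> outdeg A v = 2) \<or>
         (v \<in> X \<and> indeg A v = 1 \<and> outdeg A v = 0) \<or>
         (v \<noteq> r \<and> v \<notin> X \<and> \<not> hybrid_vertex A v \<and> indeg A v = 1 \<and> outdeg A v = 2) \<or>
         (hybrid_vertex A v \<and> indeg A v = 2 \<and> outdeg A v = 1)"
proof -
  have c: "is_root V A v \<or> v \<in> X \<or> split_vertex A v \<or> hybrid_vertex A v"
    using pn assms unfolding phylo_network_def by auto
  have b: "(is_root V A v \<longrightarrow> outdeg A v = 2) \<and> (split_vertex A v \<longrightarrow> outdeg A v = 2) \<and>
           (hybrid_vertex A v \<longrightarrow> indeg A v = 2 \<and> outdeg A v = 1)"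
    using bn assms unfolding binary_network_def by auto
  have rr: "indeg A r = 0" using root unfolding is_root_def by auto
  show ?thesis
  proof (cases "is_root V A v")
    case True then show ?thesis using root_uniq b rr by auto
  next
    case nr: False
    show ?thesis
    proof (cases "v \<in> X")
      case True then show ?thesis using Xleaves unfolding leaves_def by auto
    next
      case nX: False
      show ?thesis
      proof (cases "hybrid_vertex A v")
        case True then show ?thesis using b by auto
      next
        case False
        then have s: "split_vertex A v" using c nX nr by auto
        then have "v \<noteq> r" using rr unfolding split_vertex_def by auto
        then show ?thesis using s b nX False unfolding split_vertex_def by auto
      qed
    qed
  qed
qed

lemma hyb_iff: "v \<in> V \<Longrightarrow> hybrid_vertex A v \<longleftrightarrow> indeg A v = 2"
  using deg_cases[of v] unfolding hybrid_vertex_def by auto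

lemma par_ex:
  assumes "v \<in> V" "v \<noteq> r" shows "\<exists>p. (p, v) \<in> A"
proof -
  have "indeg A v \<noteq> 0" using deg_cases[OF assms(1)] assms(2) by auto
  then show ?thesis unfolding indeg_def by (metis (mono_tags, lifting) card.empty empty_Collect_eq)
qed

lemma wfA: "wf A" using finA acyc by (rule finite_acyclic_wf)

lemma reach: "u \<in> V \<Longrightarrow> (r, u) \<in> A\<^sup>*"
proof (induction u rule: wf_induct_rule[OF wfA])
  case (1 u)
  show ?case
  proof (cases "u = r")
    case True then show ?thesis by simp
  next
    case False
    then obtain p where p: "(p, u) \<in> A" using par_ex 1 by blast
    then have "(r, p) \<in> A\<^sup>*" using 1 arcV by blast
    then show ?thesis using p by (rule rtrancl_into_rtrancl)
  qed
qed

lemma rtrancl_V: "(z, y) \<in> A\<^sup>* \<Longrightarrow> y \<in> V \<Longrightarrow> z \<in> V"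
  by (erule converse_rtranclE) (auto dest: arcV)

lemma nbrs_card: "v \<in> V \<Longrightarrow> card {u. adj A v u} \<le> 3"
proof -
  assume v: "v \<in> V"
  have "{u. adj A v u} = {u. (u, v) \<in> A} \<union> {u. (v, u) \<in> A}" unfolding adj_def by auto
  then have "card {u. adj A v u} \<le> indeg A v + outdeg A v"
    unfolding indeg_def outdeg_def by (metis card_Un_le)
  then show ?thesis using deg_cases[OF v] by auto
qed

lemma finnbrs: "finite {u. adj A v u}"
  unfolding adj_def by (rule finite_subset[OF _ finV]) (auto dest: arcV)

lemma two_nbrs:
  assumes S: "ubiconnected V A S" "card S \<ge> 3" and u: "u \<in> S"
  shows "\<exists>y1 y2. y1 \<in> S \<and> y2 \<in> S \<and> y1 \<noteq> y2 \<and> adj A u y1 \<and> adj A u y2 \<and> y1 \<noteq> u \<and> y2 \<noteq> u"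
proof -
  have fS: "finite S" and cS: "uconnected_on A S" and cS': "\<forall>x\<in>S. uconnected_on A (S - {x})"
    using S unfolding ubiconnected_def by auto
  have "\<not> S \<subseteq> {u}"
  proof
    assume "S \<subseteq> {u}"
    then have "card S \<le> card {u}" by (intro card_mono) auto
    then show False using S(2) by simp
  qed
  then obtain z where z: "z \<in> S" "z \<noteq> u" by auto
  have "(u, z) \<in> (uedges_on A S)\<^sup>*" using cS u z unfolding uconnected_on_def by auto
  then obtain c where c: "(u, c) \<in> uedges_on A S"
    using z(2) by (blast elim: converse_rtranclE)
  then have cS: "c \<in> S" "adj A u c" by (simp_all add: uedges_on_iff)
  have cu: "c \<noteq> u" using cS(2) no_loop unfolding adj_def by auto
  have "\<not> S \<subseteq> {u, c}"
  proof
    assume "S \<subseteq> {u, c}"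
    then have "card S \<le> card {u, c}" by (intro card_mono) auto
    also have "\<dots> \<le> 2" by (simp add: card_insert_le_m1)
    finally show False using S(2) by simp
  qed
  then obtain z' where z': "z' \<in> S" "z' \<noteq> u" "z' \<noteq> c" by auto
  have "(u, z') \<in> (uedges_on A (S - {c}))\<^sup>*"
    using cS' cS(1) u z' cu unfolding uconnected_on_def by auto
  then obtain d where d: "(u, d) \<in> uedges_on A (S - {c})"
    using z'(2) by (blast elim: converse_rtranclE)
  then have dS: "d \<in> S" "d \<noteq> c" "adj A u d" by (simp_all add: uedges_on_iff)
  have du: "d \<noteq> u" using dS(3) no_loop unfolding adj_def by auto
  show ?thesis using cS dS cu du by blast
qed

lemma no_leaf:
  assumes S: "ubiconnected V A S" "card S \<ge> 3" and x: "x \<in> S"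
  shows "x \<notin> X"
proof
  assume xX: "x \<in> X"
  then have xV: "x \<in> V" using XV by auto
  have d: "indeg A x = 1" "outdeg A x = 0" using xX Xleaves unfolding leaves_def by auto
  have "{w. (x, w) \<in> A} = {}" using d(2) finch[of x] unfolding outdeg_def by simp
  moreover have "\<exists>p. {u. (u, x) \<in> A} = {p}" using d(1) unfolding indeg_def
    by (simp add: card_1_singleton_iff)
  then obtain p where "{u. (u, x) \<in> A} = {p}" by blast
  ultimately have "\<And>y. adj A x y \<Longrightarrow> y = p" unfolding adj_def by auto
  then show False using two_nbrs[OF S x] by auto
qed

lemma card4:
  assumes S: "ubiconnected V A S" "card S \<ge> 3"
  shows "card S \<ge> 4"
proof (rule ccontr)
  assume "\<not> card S \<ge> 4"
  then have c3: "card S = 3" using S(2) by auto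
  have fS: "finite S" using S unfolding ubiconnected_def by auto
  have "S \<noteq> {}" using c3 by auto
  then obtain a where a: "a \<in> S" by auto
  obtain y1 y2 where y: "y1 \<in> S" "y2 \<in> S" "y1 \<noteq> y2" "adj A a y1" "adj A a y2" "y1 \<noteq> a" "y2 \<noteq> a"
    using two_nbrs[OF S a] by blast
  have "{a, y1, y2} \<subseteq> S" using a y by auto
  moreover have "card {a, y1, y2} = 3" using y by auto
  ultimately have Seq: "S = {a, y1, y2}" using fS c3 by (metis card_subset_eq)
  obtain z1 z2 where z: "z1 \<in> S" "z2 \<in> S" "z1 \<noteq> z2" "adj A y1 z1" "adj A y1 z2" "z1 \<noteq> y1" "z2 \<noteq> y1"
    using two_nbrs[OF S y(1)] by blast
  have "adj A y1 y2" using z Seq by auto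
  then show False using ntri y unfolding no_short_cycle_def uedges_on_def adj_def by blast
qed

lemma bic_ext:
  assumes "ubiconnected V A S"
  shows "\<exists>T. bicomponent V A T \<and> S \<subseteq> T"
proof -
  let ?P = "\<lambda>T. ubiconnected V A T \<and> S \<subseteq> T"
  have "\<forall>T. ?P T \<longrightarrow> card T < Suc (card V)"
    using finV unfolding ubiconnected_def by (auto intro: card_mono le_imp_less_Suc)
  then obtain T where T: "?P T" "\<forall>T'. ?P T' \<longrightarrow> card T' \<le> card T"
    using ex_has_greatest_nat[of ?P S card "Suc (card V)"] assms by blast
  have "bicomponent V A T"
    unfolding bicomponent_def
  proof (intro conjI allI impI)
    show "ubiconnected V A T" using T by auto
    fix T' assume T': "ubiconnected V A T' \<and> T \<subseteq> T'"
    then have "card T' \<le> card T" using T by blast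
    moreover have "finite T'" using T' unfolding ubiconnected_def by auto
    ultimately show "T' = T" using T' card_seteq[of T' T] by auto
  qed
  then show ?thesis using T by blast
qed

lemma hyb_le1:
  assumes "ubiconnected V A S" "v \<in> S" "w \<in> S" "hybrid_vertex A v" "hybrid_vertex A w"
  shows "v = w"
proof -
  obtain T where T: "bicomponent V A T" "S \<subseteq> T" using bic_ext assms(1) by blast
  have "finite T" using T unfolding bicomponent_def ubiconnected_def by auto
  then have "finite {x\<in>T. hybrid_vertex A x}" by auto
  moreover have "card {x\<in>T. hybrid_vertex A x} \<le> 1" using lvl T by auto
  ultimately show ?thesis using assms T by (auto simp: card_le_Suc0_iff_eq)
qed

end



context bl1 begin

lemma hyb_cycle:
  assumes vV: "v \<in> V" and hv: "hybrid_vertex A v"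
  shows "\<exists>B p1 p2. ubiconnected V A B \<and> v \<in> B \<and> card B \<ge> 3 \<and>
           p1 \<noteq> p2 \<and> (p1, v) \<in> A \<and> (p2, v) \<in> A \<and> p1 \<in> B \<and> p2 \<in> B"
proof -
  have "card {u. (u, v) \<in> A} = 2" using hyb_iff vV hv unfolding indeg_def by auto
  then obtain p1 p2 where pp: "{u. (u, v) \<in> A} = {p1, p2}" "p1 \<noteq> p2"
    by (auto simp: card_2_iff)
  have a1: "(p1, v) \<in> A" and a2: "(p2, v) \<in> A" using pp(1) by auto
  have p1V: "p1 \<in> V" and p2V: "p2 \<in> V" using a1 a2 arcV by auto
  define CA where "CA = {w \<in> V. (w, p1) \<in> A\<^sup>* \<and> (w, p2) \<in> A\<^sup>*}"
  have rCA: "r \<in> CA" unfolding CA_def using reach p1V p2V rV by auto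
  have wfc: "wf (A\<inverse>)" using finA acyc by (rule finite_acyclic_wf_converse)
  obtain w where w: "w \<in> CA" "\<And>y. (y, w) \<in> A\<inverse> \<Longrightarrow> y \<notin> CA"
    using wfE_min[OF wfc rCA] by blast
  have wmin: "\<And>y. (w, y) \<in> A \<Longrightarrow> y \<notin> CA" using w(2) by auto
  have wp: "(w, p1) \<in> A\<^sup>*" "(w, p2) \<in> A\<^sup>*" using w(1) unfolding CA_def by auto
  obtain P1 where P1: "apath A P1" "P1 \<noteq> []" "hd P1 = w" "last P1 = p1"
    using apath_exists[OF wp(1)] by blast
  obtain P2 where P2: "apath A P2" "P2 \<noteq> []" "hd P2 = w" "last P2 = p2"
    using apath_exists[OF wp(2)] by blast
  have int: "set P1 \<inter> set P2 \<subseteq> {w}"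
  proof
    fix z assume z: "z \<in> set P1 \<inter> set P2"
    have wz: "(w, z) \<in> A\<^sup>*" using apath_rtrancl_hd[OF P1(1)] z P1(3) by auto
    have z1: "(z, p1) \<in> A\<^sup>*" using apath_rtrancl_last[OF P1(1)] z P1(4) by auto
    have z2: "(z, p2) \<in> A\<^sup>*" using apath_rtrancl_last[OF P2(1)] z P2(4) by auto
    show "z \<in> {w}"
    proof (rule ccontr)
      assume "z \<notin> {w}"
      then have "w \<noteq> z" by auto
      then obtain y where y: "(w, y) \<in> A" "(y, z) \<in> A\<^sup>*"
        using wz by (blast elim: converse_rtranclE)
      have "y \<in> V" using y(1) arcV by auto
      moreover have "(y, p1) \<in> A\<^sup>*" "(y, p2) \<in> A\<^sup>*" using y(2) z1 z2 by auto
      ultimately have "y \<in> CA" unfolding CA_def by auto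
      then show False using wmin y(1) by auto
    qed
  qed
  have vn1: "v \<notin> set P1"
  proof
    assume "v \<in> set P1"
    then have "(v, p1) \<in> A\<^sup>*" using apath_rtrancl_last[OF P1(1)] P1(4) by auto
    then have "(v, v) \<in> A\<^sup>+" using a1 by auto
    then show False using acyc unfolding acyclic_def by auto
  qed
  have vn2: "v \<notin> set P2"
  proof
    assume "v \<in> set P2"
    then have "(v, p2) \<in> A\<^sup>*" using apath_rtrancl_last[OF P2(1)] P2(4) by auto
    then have "(v, v) \<in> A\<^sup>+" using a2 by auto
    then show False using acyc unfolding acyclic_def by auto
  qed
  have wP1: "w \<in> set P1" using hd_in_set[OF P1(2)] P1(3) by simp
  have wP2: "w \<in> set P2" using hd_in_set[OF P2(2)] P2(3) by simp
  define Q1 where "Q1 = P1 @ [v]"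
  define Q2 where "Q2 = P2 @ [v]"
  have q1: "apath A Q1" unfolding Q1_def using P1 a1 by (simp add: apath_append)
  have q2: "apath A Q2" unfolding Q2_def using P2 a2 by (simp add: apath_append)
  have d1: "distinct Q1" using apath_distinct[OF acyc q1] .
  have d2: "distinct Q2" using apath_distinct[OF acyc q2] .
  have hq1: "hd Q1 = w" unfolding Q1_def using P1 by simp
  have hq2: "hd Q2 = w" unfolding Q2_def using P2 by simp
  have lq1: "last Q1 = v" unfolding Q1_def by simp
  have lq2: "last Q2 = v" unfolding Q2_def by simp
  have wv: "w \<noteq> v" using wP1 vn1 by auto
  have iq: "set Q1 \<inter> set Q2 = {w, v}" unfolding Q1_def Q2_def using int wP1 wP2 by auto
  have ne: "Q1 \<noteq> []" "Q2 \<noteq> []" unfolding Q1_def Q2_def by auto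
  note cc = cycle_conn[OF q1 q2 d1 d2 ne hq1 hq2 lq1 lq2 wv iq]
  define B where "B = set Q1 \<union> set Q2"
  have p1B: "p1 \<in> B" unfolding B_def Q1_def using last_in_set[OF P1(2)] P1(4) by auto
  have p2B: "p2 \<in> B" unfolding B_def Q2_def using last_in_set[OF P2(2)] P2(4) by auto
  have vB: "v \<in> B" unfolding B_def Q1_def by simp
  have BV: "B \<subseteq> V"
  proof
    fix z assume "z \<in> B"
    then have "z = v \<or> z \<in> set P1 \<or> z \<in> set P2" unfolding B_def Q1_def Q2_def by auto
    then show "z \<in> V"
    proof (elim disjE)
      assume "z \<in> set P1"
      then have "(z, p1) \<in> A\<^sup>*" using apath_rtrancl_last[OF P1(1)] P1(4) by auto
      then show ?thesis using rtrancl_V p1V by blast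
    next
      assume "z \<in> set P2"
      then have "(z, p2) \<in> A\<^sup>*" using apath_rtrancl_last[OF P2(1)] P2(4) by auto
      then show ?thesis using rtrancl_V p2V by blast
    qed (use vV in auto)
  qed
  have fB: "finite B" using BV finV finite_subset by auto
  have pv: "p1 \<noteq> v" "p2 \<noteq> v" using a1 a2 no_loop by auto
  have "card {p1, p2, v} = 3" using pp(2) pv by auto
  moreover have "card {p1, p2, v} \<le> card B" using p1B p2B vB fB by (intro card_mono) auto
  ultimately have cB: "card B \<ge> 3" by simp
  have "ubiconnected V A B"
    unfolding ubiconnected_def using BV fB cB cc unfolding B_def Q1_def Q2_def by auto
  then show ?thesis using vB cB pp(2) a1 a2 p1B p2B by blast
qed

end



context bl1 begin

definition H where "H = {v \<in> V. hybrid_vertex A v}"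
definition Rs where "Rs = V - X - H"

definition Bf where "Bf v = (SOME B. \<exists>p1 p2. ubiconnected V A B \<and> v \<in> B \<and> card B \<ge> 3 \<and>
           p1 \<noteq> p2 \<and> (p1, v) \<in> A \<and> (p2, v) \<in> A \<and> p1 \<in> B \<and> p2 \<in> B)"

lemma Bf: "v \<in> H \<Longrightarrow> \<exists>p1 p2. ubiconnected V A (Bf v) \<and> v \<in> Bf v \<and> card (Bf v) \<ge> 3 \<and>
           p1 \<noteq> p2 \<and> (p1, v) \<in> A \<and> (p2, v) \<in> A \<and> p1 \<in> Bf v \<and> p2 \<in> Bf v"
  unfolding Bf_def H_def by (rule someI_ex) (use hyb_cycle in auto)

lemma Bf_ub: "v \<in> H \<Longrightarrow> ubiconnected V A (Bf v)" using Bf by blast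
lemma Bf_in: "v \<in> H \<Longrightarrow> v \<in> Bf v" using Bf by blast
lemma Bf_c3: "v \<in> H \<Longrightarrow> card (Bf v) \<ge> 3" using Bf by blast

lemma Bf_disj:
  assumes v: "v \<in> H" and w: "w \<in> H" and vw: "v \<noteq> w"
  shows "Bf v \<inter> Bf w = {}"
proof (rule ccontr)
  assume "Bf v \<inter> Bf w \<noteq> {}"
  then obtain u where u: "u \<in> Bf v" "u \<in> Bf w" by auto
  have uV: "u \<in> V" using u(1) Bf_ub[OF v] unfolding ubiconnected_def by auto
  obtain y1 y2 where y: "y1 \<in> Bf v" "y2 \<in> Bf v" "y1 \<noteq> y2" "adj A u y1" "adj A u y2" "y1 \<noteq> u" "y2 \<noteq> u"
    using two_nbrs[OF Bf_ub[OF v] Bf_c3[OF v] u(1)] by blast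
  obtain z1 z2 where z: "z1 \<in> Bf w" "z2 \<in> Bf w" "z1 \<noteq> z2" "adj A u z1" "adj A u z2" "z1 \<noteq> u" "z2 \<noteq> u"
    using two_nbrs[OF Bf_ub[OF w] Bf_c3[OF w] u(2)] by blast
  have "\<exists>c. c \<in> Bf v \<and> c \<in> Bf w \<and> c \<noteq> u"
  proof (rule ccontr)
    assume no: "\<not> ?thesis"
    then have "y1 \<noteq> z1" "y1 \<noteq> z2" "y2 \<noteq> z1" "y2 \<noteq> z2" using y z by auto
    then have "card {y1, y2, z1, z2} = 4" using y(3) z(3) by auto
    moreover have "card {y1, y2, z1, z2} \<le> card {x. adj A u x}"
      using y z finnbrs by (intro card_mono) auto
    ultimately show False using nbrs_card[OF uV] by simp
  qed
  then obtain c where c: "c \<in> Bf v" "c \<in> Bf w" "c \<noteq> u" by blast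
  have "ubiconnected V A (Bf v \<union> Bf w)"
    using ubic_Un[OF Bf_ub[OF v] Bf_ub[OF w] u c(1,2)] c(3) by simp
  moreover have "hybrid_vertex A v" "hybrid_vertex A w" using v w unfolding H_def by auto
  ultimately have "v = w" using Bf_in[OF v] Bf_in[OF w] hyb_le1[of "Bf v \<union> Bf w" v w] by auto
  then show False using vw by simp
qed

lemma finH: "finite H" unfolding H_def using finV by auto
lemma finX: "finite X" using XV finV finite_subset by auto
lemma finRs: "finite Rs" unfolding Rs_def using finV by auto

lemma Bf_sub: assumes v: "v \<in> H" shows "Bf v - {v} \<subseteq> Rs"
proof
  fix u assume u: "u \<in> Bf v - {v}"
  have uV: "u \<in> V" using u Bf_ub[OF v] unfolding ubiconnected_def by auto
  have "u \<notin> X" using no_leaf[OF Bf_ub[OF v] Bf_c3[OF v]] u by auto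
  moreover have "u \<notin> H"
  proof
    assume "u \<in> H"
    then have "u = v" using hyb_le1[OF Bf_ub[OF v], of u v] u Bf_in[OF v] v unfolding H_def by auto
    then show False using u by auto
  qed
  ultimately show "u \<in> Rs" unfolding Rs_def using uV by auto
qed

lemma three_H: "3 * card H \<le> card Rs"
proof -
  have fin: "\<forall>v\<in>H. finite (Bf v - {v})"
    using Bf_ub unfolding ubiconnected_def by auto
  have dj: "\<forall>v\<in>H. \<forall>w\<in>H. v \<noteq> w \<longrightarrow> (Bf v - {v}) \<inter> (Bf w - {w}) = {}"
    using Bf_disj by blast
  have c: "card (\<Union>v\<in>H. Bf v - {v}) = (\<Sum>v\<in>H. card (Bf v - {v}))"
    using card_UN_disjoint[OF finH fin dj] .
  have ge: "\<forall>v\<in>H. 3 \<le> card (Bf v - {v})"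
  proof
    fix v assume v: "v \<in> H"
    have "card (Bf v) \<ge> 4" using card4[OF Bf_ub[OF v] Bf_c3[OF v]] .
    moreover have "finite (Bf v)" using Bf_ub[OF v] unfolding ubiconnected_def by auto
    ultimately show "3 \<le> card (Bf v - {v})" using Bf_in[OF v] by (simp add: card_Diff_singleton)
  qed
  have "3 * card H = (\<Sum>v\<in>H. 3)" by simp
  also have "\<dots> \<le> (\<Sum>v\<in>H. card (Bf v - {v}))" using ge by (intro sum_mono) auto
  also have "\<dots> = card (\<Union>v\<in>H. Bf v - {v})" using c by simp
  also have "\<dots> \<le> card Rs" using Bf_sub finRs by (intro card_mono) auto
  finally show ?thesis .
qed

lemma sum_outdeg: "card A = (\<Sum>v\<in>V. outdeg A v)"
proof -
  have "A = (SIGMA v:V. {w. (v, w) \<in> A})" using AV by auto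
  then have "card A = card (SIGMA v:V. {w. (v, w) \<in> A})" by simp
  also have "\<dots> = (\<Sum>v\<in>V. outdeg A v)" unfolding outdeg_def using finV finch by simp
  finally show ?thesis .
qed

lemma sum_indeg: "card A = (\<Sum>v\<in>V. indeg A v)"
proof -
  have "prod.swap ` A = (SIGMA v:V. {u. (u, v) \<in> A})" using AV by force
  then have "card A = card (SIGMA v:V. {u. (u, v) \<in> A})" by (metis card_image inj_swap)
  also have "\<dots> = (\<Sum>v\<in>V. indeg A v)" unfolding indeg_def using finV finpar by simp
  finally show ?thesis .
qed

lemma XH: "X \<inter> H = {}"
  using Xleaves unfolding leaves_def H_def hybrid_vertex_def by auto

lemma rRs: "r \<in> Rs"
proof -
  have "indeg A r = 0" using root unfolding is_root_def by auto
  then show ?thesis unfolding Rs_def H_def using rV Xleaves unfolding leaves_def hybrid_vertex_def by auto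
qed

lemma key: "card V + 1 = 2 * card X + 2 * card H \<and> card A + 2 = 2 * card X + 3 * card H \<and>
   2 * card H + 1 \<le> card X \<and> card Rs + 1 = card X + card H"
proof -
  have HV: "H \<subseteq> V - X" using XH unfolding H_def by auto
  have s1: "\<And>f :: 'a \<Rightarrow> nat. sum f V = sum f Rs + sum f H + sum f X"
  proof -
    fix f :: "'a \<Rightarrow> nat"
    have "sum f V = sum f (V - X) + sum f X" using sum.subset_diff[OF XV finV] by simp
    moreover have "sum f (V - X) = sum f Rs + sum f H"
      using sum.subset_diff[OF HV] finV unfolding Rs_def by simp
    ultimately show "sum f V = sum f Rs + sum f H + sum f X" by simp
  qed
  have cV: "card V = card Rs + card H + card X" using s1[of "\<lambda>_. 1"] by simp
  have dX: "\<And>v. v \<in> X \<Longrightarrow> indeg A v = 1 \<and> outdeg A v = 0"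
    using Xleaves unfolding leaves_def by auto
  have dH: "\<And>v. v \<in> H \<Longrightarrow> indeg A v = 2 \<and> outdeg A v = 1"
  proof -
    fix v assume "v \<in> H"
    then have "v \<in> V" "hybrid_vertex A v" unfolding H_def by auto
    then show "indeg A v = 2 \<and> outdeg A v = 1" using deg_cases[of v] unfolding hybrid_vertex_def by auto
  qed
  have dR: "\<And>v. v \<in> Rs \<Longrightarrow> outdeg A v = 2 \<and> (v \<noteq> r \<longrightarrow> indeg A v = 1) \<and> (v = r \<longrightarrow> indeg A v = 0)"
  proof -
    fix v assume v: "v \<in> Rs"
    then have "v \<in> V" "v \<notin> X" "\<not> hybrid_vertex A v" unfolding Rs_def H_def by auto
    then show "outdeg A v = 2 \<and> (v \<noteq> r \<longrightarrow> indeg A v = 1) \<and> (v = r \<longrightarrow> indeg A v = 0)"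
      using deg_cases[of v] by auto
  qed
  have iX: "sum (indeg A) X = card X" using dX by simp
  have oX: "sum (outdeg A) X = 0" using dX by simp
  have iH: "sum (indeg A) H = 2 * card H" using dH by simp
  have oH: "sum (outdeg A) H = card H" using dH by simp
  have oR: "sum (outdeg A) Rs = 2 * card Rs" using dR by simp
  have "sum (indeg A) Rs = indeg A r + sum (indeg A) (Rs - {r})"
    using sum.remove[OF finRs rRs] by simp
  also have "\<dots> = card (Rs - {r})" using dR rRs by simp
  also have "\<dots> = card Rs - 1" using rRs finRs by (simp add: card_Diff_singleton)
  finally have iR: "sum (indeg A) Rs = card Rs - 1" .
  have cR1: "card Rs \<ge> 1" using rRs finRs by (metis One_nat_def Suc_leI card_gt_0_iff empty_iff)
  have eq1: "card A = card Rs - 1 + 2 * card H + card X" using sum_indeg s1[of "indeg A"] iX iH iR by simp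
  have eq2: "card A = 2 * card Rs + card H" using sum_outdeg s1[of "outdeg A"] oX oH oR by simp
  have "card Rs + 1 = card X + card H" using eq1 eq2 cR1 by linarith
  then show ?thesis using cV eq2 three_H by linarith
qed

end



context bl1 begin

lemma no2cycle: "(a, b) \<in> A \<Longrightarrow> (b, a) \<notin> A"
proof
  assume "(a, b) \<in> A" "(b, a) \<in> A"
  then have "(a, a) \<in> A\<^sup>+" by auto
  then show False using acyc unfolding acyclic_def by auto
qed

lemma gall_card3:
  assumes g: "gall V A G" shows "ubiconnected V A G \<and> card G \<ge> 3"
proof -
  have ub: "ubiconnected V A G" using g unfolding gall_def bicomponent_def by auto
  have arcs: "card {(u, v) \<in> A. u \<in> G \<and> v \<in> G} > 1" using g unfolding gall_def by auto
  have "card G \<noteq> 2"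
  proof
    assume "card G = 2"
    then obtain a b where ab: "G = {a, b}" "a \<noteq> b" by (auto simp: card_2_iff)
    have "{(u, v) \<in> A. u \<in> G \<and> v \<in> G} \<subseteq> {(a, b)} \<or> {(u, v) \<in> A. u \<in> G \<and> v \<in> G} \<subseteq> {(b, a)}"
      using ab no_loop no2cycle by auto
    then have "card {(u, v) \<in> A. u \<in> G \<and> v \<in> G} \<le> 1"
    proof (elim disjE)
      assume "{(u, v) \<in> A. u \<in> G \<and> v \<in> G} \<subseteq> {(a, b)}"
      then have "card {(u, v) \<in> A. u \<in> G \<and> v \<in> G} \<le> card {(a, b)}" by (intro card_mono) auto
      then show ?thesis by simp
    next
      assume "{(u, v) \<in> A. u \<in> G \<and> v \<in> G} \<subseteq> {(b, a)}"
      then have "card {(u, v) \<in> A. u \<in> G \<and> v \<in> G} \<le> card {(b, a)}" by (intro card_mono) auto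
      then show ?thesis by simp
    qed
    then show False using arcs by simp
  qed
  then show ?thesis using ub unfolding ubiconnected_def by auto
qed

lemma simple3:
  assumes n3: "card X = 3" and h1: "card H \<ge> 1"
  shows "simple_network V A X"
proof -
  have k: "card V + 1 = 2 * card X + 2 * card H" "2 * card H + 1 \<le> card X" using key by auto
  have cH: "card H = 1" using k(2) n3 h1 by simp
  have cV: "card V = 7" using k(1) cH n3 by simp
  have cVX: "card (V - X) = 4" using cV n3 XV finX by (simp add: card_Diff_subset)
  have fVX: "finite (V - X)" using finV by auto
  have eqVX: "\<And>S. ubiconnected V A S \<Longrightarrow> card S \<ge> 3 \<Longrightarrow> S = V - X"
  proof -
    fix S assume S: "ubiconnected V A S" "card S \<ge> 3"
    have "S \<subseteq> V - X" using no_leaf[OF S] S(1) unfolding ubiconnected_def by auto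
    moreover have "card S \<ge> 4" using card4[OF S] .
    ultimately show "S = V - X" using card_seteq[OF fVX, of S] cVX by auto
  qed
  have "H \<noteq> {}" using cH by auto
  then obtain v where v: "v \<in> H" by auto
  obtain p1 p2 where B: "ubiconnected V A (Bf v)" "v \<in> Bf v" "card (Bf v) \<ge> 3"
      "p1 \<noteq> p2" "(p1, v) \<in> A" "(p2, v) \<in> A" "p1 \<in> Bf v" "p2 \<in> Bf v"
    using Bf[OF v] by blast
  obtain T where T: "bicomponent V A T" "Bf v \<subseteq> T" using bic_ext[OF B(1)] by blast
  have Tub: "ubiconnected V A T" using T unfolding bicomponent_def by auto
  have "card (Bf v) \<le> card T" using T(2) Tub unfolding ubiconnected_def by (intro card_mono) auto
  then have TVX: "T = V - X" using eqVX[OF Tub] B(3) by simp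
  have "{(p1, v), (p2, v)} \<subseteq> {(a, b) \<in> A. a \<in> T \<and> b \<in> T}" using B T(2) by auto
  moreover have "finite {(a, b) \<in> A. a \<in> T \<and> b \<in> T}" using finA by (rule finite_subset[rotated]) auto
  ultimately have "card {(p1, v), (p2, v)} \<le> card {(a, b) \<in> A. a \<in> T \<and> b \<in> T}" by (rule card_mono[rotated])
  then have gT: "gall V A T" unfolding gall_def using T(1) B(4) by auto
  have uq: "\<forall>G'. gall V A G' \<longrightarrow> G' = T"
  proof (intro allI impI)
    fix G' assume "gall V A G'"
    then have "ubiconnected V A G'" "card G' \<ge> 3" using gall_card3 by auto
    then show "G' = T" using eqVX TVX by auto
  qed
  have lv: "\<forall>x\<in>X. \<exists>g\<in>T. (g, x) \<in> A \<or> (x, g) \<in> A"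
  proof
    fix x assume x: "x \<in> X"
    then have "indeg A x = 1" using Xleaves unfolding leaves_def by auto
    then have "{u. (u, x) \<in> A} \<noteq> {}" unfolding indeg_def by (metis card.empty zero_neq_one)
    then obtain p where p: "(p, x) \<in> A" by auto
    have pV: "p \<in> V" using p arcV by auto
    have "p \<notin> X"
    proof
      assume "p \<in> X"
      then have "outdeg A p = 0" using Xleaves unfolding leaves_def by auto
      then have "{w. (p, w) \<in> A} = {}" using finch[of p] unfolding outdeg_def by simp
      then show False using p by auto
    qed
    then show "\<exists>g\<in>T. (g, x) \<in> A \<or> (x, g) \<in> A" using p pV TVX by auto
  qed
  show ?thesis unfolding simple_network_def using bl gT uq lv by blast
qed

end

theorem mainTheorem1:
  fixes V :: "'a set" and A :: "('a \<times> 'a) set" and X :: "'a set" and n :: nat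
  assumes "binary_level1 V A X"
    and "proper_network V A"
    and "n = card X"
    and "n \<ge> 3"
  shows "2 * n + 1 \<le> card V \<and> card V \<le> 3 * n - 2 \<and>
         2 * n + 1 \<le> card A \<and> real (card A) \<le> 3.5 * (real n - 1) \<and>
         (n = 3 \<longrightarrow> card V = 7 \<and> card A = 7 \<and> simple_network V A X)"
proof -
  interpret bl1 V A X using assms(1) by unfold_locales
  have "H \<noteq> {}" using assms(2) unfolding proper_network_def H_def by auto
  then have h1: "card H \<ge> 1" using finH by (simp add: Suc_le_eq card_gt_0_iff)
  have k: "card V + 1 = 2 * card X + 2 * card H" "card A + 2 = 2 * card X + 3 * card H"
     "2 * card H + 1 \<le> card X" using key by auto
  have r1: "2 * n + 1 \<le> card V" "card V \<le> 3 * n - 2" "2 * n + 1 \<le> card A"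
    using k h1 assms(3,4) by linarith+
  have "real (card A) + 2 = 2 * real n + 3 * real (card H)"
    using k(2) assms(3) by (metis of_nat_add of_nat_mult of_nat_numeral)
  moreover have "2 * real (card H) + 1 \<le> real n" using k(3) assms(3) by linarith
  ultimately have r2: "real (card A) \<le> 3.5 * (real n - 1)" by (simp add: field_simps)
  have r3: "n = 3 \<longrightarrow> card V = 7 \<and> card A = 7 \<and> simple_network V A X"
  proof
    assume n3: "n = 3"
    then have "card H = 1" using k(3) h1 assms(3) by simp
    then have "card V = 7 \<and> card A = 7" using k n3 assms(3) by simp
    then show "card V = 7 \<and> card A = 7 \<and> simple_network V A X"
      using simple3 h1 n3 assms(3) by simp
  qed
  show ?thesis using r1 r2 r3 by blast
qed


end
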